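(* Let $M$ be the $8\times8$ matrix (rows and columns indexed $0,\dots,7$) \[ \begin{pmatrix} \frac18&\frac18&\frac18&\frac18&\frac18&\frac18&\frac18&\frac18\\ \frac38&\frac{59}{168}&\frac{17}{56}&\frac{13}{56}&\frac{23}{168}&\frac1{56}&-\frac18&-\frac7{24}\\ \frac58&\frac{85}{168}&\frac7{24}&\frac5{168}&-\frac5{24}&-\frac{55}{168}&-\frac5{24}&\frac7{24}\\ \frac78&\frac{13}{24}&\frac1{24}&-\frac{31}{88}&-\frac{101}{264}&\frac1{88}&\frac{119}{264}&-\frac{49}{264}\\ \frac98&\frac{23}{56}&-\frac38&-\frac{303}{616}&\frac18&\frac{309}{616}&-\frac38&\frac7{88}\\ \frac{11}8&\frac{11}{168}&-\frac{121}{168}&\frac1{56}&\frac{103}{168}&-\frac{363}{728}&\frac{53}{312}&-\frac7{312}\\ \frac{13}8&-\frac{13}{24}&-\frac{13}{24}&\frac{221}{264}&-\frac{13}{24}&\frac{53}{264}&-\frac1{24}&\frac1{264}\\ \frac{15}8&-\frac{35}{24}&\frac78&-\frac{35}{88}&\frac{35}{264}&-\frac{35}{1144}&\frac5{1144}&-\frac1{3432} \end{pmatrix}. \] Consider real vectors $\tilde A=(\tilde A_0,\dots,\tilde A_7)$, $\tilde B=(\tilde B_0,\dots,\tilde B_7)$ satisfying: $\tilde A_0=\tilde B_0=1$; $0\le\tilde A_k\le\tilde B_k$ for $0\le k\le7$; $\sum_k\tilde A_k=4$; $\sum_k\tilde B_k=16$; $\tilde B=2M\tilde A$; $\tilde A_1=\tilde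 B_1$; and $\tilde A_2=\tilde B_2$. Then the unique solution is \[ \tilde A=(1,0,0,0,0,0,3,0),\qquad \tilde B=(1,0,0,\tfrac{49}{11},0,\tfrac{49}{13},3,\tfrac{540}{143}). \]
   Context: This is the normalized intrinsic linear program for two-dimensional codes of depth 3 (detecting the spin-1 and spin-2 sectors) in the spin-$7/2$ irrep $V_{7/2}\cong\mathrm{Sym}^7(\mathbb C^2)$ of $\mathrm{SU}(2)$: $M$ is the unnormalized MacWilliams matrix $M_{k_1k_2}=(-1)^{7+k_1+k_2}(2k_1+1)\{\begin{smallmatrix}7/2&7/2&k_1\\7/2&7/2&k_2\end{smallmatrix}\}$ (Wigner $6j$-symbol), and normalized enumerators are $\tilde A_k=\frac N{K^2}A_k(P,P)$, $\tilde B_k=\frac NKB_k(P,P)$ with $N=8$, $K=2$. *)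

theory Defs
  imports Complex_Main
begin

text \<open>The 8x8 (normalized) MacWilliams matrix, rows and columns indexed 0..7,
  entries given as a list of rows.\<close>

definition MW_rows :: "real list list" where
  "MW_rows = [
    [1/8, 1/8, 1/8, 1/8, 1/8, 1/8, 1/8, 1/8],
    [3/8, 59/168, 17/56, 13/56, 23/168, 1/56, -1/8, -7/24],
    [5/8, 85/168, 7/24, 5/168, -5/24, -55/168, -5/24, 7/24],
    [7/8, 13/24, 1/24, -31/88, -101/264, 1/88, 119/264, -49/264],
    [9/8, 23/56, -3/8, -303/616, 1/8, 309/616, -3/8, 7/88],
    [11/8, 11/168, -121/168, 1/56, 103/168, -363/728, 53/312, -7/312],
    [13/8, -13/24, -13/24, 221/264, -13/24, 53/264, -1/24, 1/264],
    [15/8, -35/24, 7/8, -35/88, 35/264, -35/1144, 5/1144, -1/3432]]"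

definition MW :: "nat \<Rightarrow> nat \<Rightarrow> real" where
  "MW i j = (MW_rows ! i) ! j"

text \<open>Feasibility conditions of the linear program; vectors are functions on
  indices 0..7 (values at other indices are irrelevant).\<close>

definition LP_feasible :: "(nat \<Rightarrow> real) \<Rightarrow> (nat \<Rightarrow> real) \<Rightarrow> bool" where
  "LP_feasible A B \<longleftrightarrow>
     A 0 = 1 \<and> B 0 = 1 \<and>
     (\<forall>k\<le>7. 0 \<le> A k \<and> A k \<le> B k) \<and>
     (\<Sum>k\<le>7. A k) = 4 \<and>
     (\<Sum>k\<le>7. B k) = 16 \<and>
     (\<forall>i\<le>7. B i = 2 * (\<Sum>j\<le>7. MW i j * A j)) \<and>
     A 1 = B 1 \<and> A 2 = B 2"

definition A_sol :: "real list" where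
  "A_sol = [1, 0, 0, 0, 0, 0, 3, 0]"

definition B_sol :: "real list" where
  "B_sol = [1, 0, 0, 49/11, 0, 49/13, 3, 540/143]"

end

theory Submission
  imports Defs
begin

lemma sum7: "(\<Sum>k\<le>(7::nat). f k) = f 0 + f 1 + f 2 + f 3 + f 4 + f 5 + f 6 + (f 7::real)"
  by (simp add: numeral_eq_Suc add.commute add.left_commute)

lemma all7: "(\<forall>k\<le>(7::nat). P k) \<longleftrightarrow> P 0 \<and> P 1 \<and> P 2 \<and> P 3 \<and> P 4 \<and> P 5 \<and> P 6 \<and> P 7"
proof -
  have "{..(7::nat)} = {0,1,2,3,4,5,6,7}" by auto
  then show ?thesis by (metis atMost_iff insert_iff singletonD)
qed

lemma row0: "(\<Sum>j\<le>7. MW 0 j * A j) = 1/8 * A 0 + 1/8 * A 1 + 1/8 * A 2 + 1/8 * A 3 + 1/8 * A 4 + 1/8 * A 5 + 1/8 * A 6 + 1/8 * A 7"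
  unfolding sum7 MW_def MW_rows_def by (simp add: numeral_eq_Suc)

lemma row1: "(\<Sum>j\<le>7. MW 1 j * A j) = 3/8 * A 0 + 59/168 * A 1 + 17/56 * A 2 + 13/56 * A 3 + 23/168 * A 4 + 1/56 * A 5 - 1/8 * A 6 - 7/24 * A 7"
  unfolding sum7 MW_def MW_rows_def by (simp add: numeral_eq_Suc)

lemma row2: "(\<Sum>j\<le>7. MW 2 j * A j) = 5/8 * A 0 + 85/168 * A 1 + 7/24 * A 2 + 5/168 * A 3 - 5/24 * A 4 - 55/168 * A 5 - 5/24 * A 6 + 7/24 * A 7"
  unfolding sum7 MW_def MW_rows_def by (simp add: numeral_eq_Suc)

lemma row3: "(\<Sum>j\<le>7. MW 3 j * A j) = 7/8 * A 0 + 13/24 * A 1 + 1/24 * A 2 - 31/88 * A 3 - 101/264 * A 4 + 1/88 * A 5 + 119/264 * A 6 - 49/264 * A 7"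
  unfolding sum7 MW_def MW_rows_def by (simp add: numeral_eq_Suc)

lemma row4: "(\<Sum>j\<le>7. MW 4 j * A j) = 9/8 * A 0 + 23/56 * A 1 - 3/8 * A 2 - 303/616 * A 3 + 1/8 * A 4 + 309/616 * A 5 - 3/8 * A 6 + 7/88 * A 7"
  unfolding sum7 MW_def MW_rows_def by (simp add: numeral_eq_Suc)

lemma row5: "(\<Sum>j\<le>7. MW 5 j * A j) = 11/8 * A 0 + 11/168 * A 1 - 121/168 * A 2 + 1/56 * A 3 + 103/168 * A 4 - 363/728 * A 5 + 53/312 * A 6 - 7/312 * A 7"
  unfolding sum7 MW_def MW_rows_def by (simp add: numeral_eq_Suc)

lemma row6: "(\<Sum>j\<le>7. MW 6 j * A j) = 13/8 * A 0 - 13/24 * A 1 - 13/24 * A 2 + 221/264 * A 3 - 13/24 * A 4 + 53/264 * A 5 - 1/24 * A 6 + 1/264 * A 7"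
  unfolding sum7 MW_def MW_rows_def by (simp add: numeral_eq_Suc)

lemma row7: "(\<Sum>j\<le>7. MW 7 j * A j) = 15/8 * A 0 - 35/24 * A 1 + 7/8 * A 2 - 35/88 * A 3 + 35/264 * A 4 - 35/1144 * A 5 + 5/1144 * A 6 - 1/3432 * A 7"
  unfolding sum7 MW_def MW_rows_def by (simp add: numeral_eq_Suc)

theorem mainTheorem13:
  shows "LP_feasible (\<lambda>k. A_sol ! k) (\<lambda>k. B_sol ! k) \<and>
         (\<forall>A B. LP_feasible A B \<longrightarrow>
            (\<forall>k\<le>7. A k = A_sol ! k \<and> B k = B_sol ! k))"
proof (rule conjI)
  show "LP_feasible (\<lambda>k. A_sol ! k) (\<lambda>k. B_sol ! k)"
    unfolding LP_feasible_def all7 row0 row1 row2 row3 row4 row5 row6 row7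
    unfolding sum7 A_sol_def B_sol_def
    by (simp add: numeral_eq_Suc)
next
  show "\<forall>A B. LP_feasible A B \<longrightarrow> (\<forall>k\<le>7. A k = A_sol ! k \<and> B k = B_sol ! k)"
  proof (rule allI, rule allI, rule impI)
  fix A B :: "nat \<Rightarrow> real"
  assume F: "LP_feasible A B"
  have Bi: "\<And>i. i \<le> 7 \<Longrightarrow> B i = 2 * (\<Sum>j\<le>7. MW i j * A j)"
    using F unfolding LP_feasible_def by blast
  have Ak: "\<And>k. k \<le> 7 \<Longrightarrow> 0 \<le> A k \<and> A k \<le> B k"
    using F unfolding LP_feasible_def by blast
  have sA: "(\<Sum>k\<le>7. A k) = 4" and e12: "A 1 = B 1" "A 2 = B 2" and a0: "A 0 = 1"
    using F unfolding LP_feasible_def by blast+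
  have r0: "B 0 = 2 * (1/8 * A 0 + 1/8 * A 1 + 1/8 * A 2 + 1/8 * A 3 + 1/8 * A 4 + 1/8 * A 5 + 1/8 * A 6 + 1/8 * A 7)"
    using Bi[of 0] row0[of A] by simp
  have r1: "B 1 = 2 * (3/8 * A 0 + 59/168 * A 1 + 17/56 * A 2 + 13/56 * A 3 + 23/168 * A 4 + 1/56 * A 5 - 1/8 * A 6 - 7/24 * A 7)"
    using Bi[of 1] row1[of A] by simp
  have r2: "B 2 = 2 * (5/8 * A 0 + 85/168 * A 1 + 7/24 * A 2 + 5/168 * A 3 - 5/24 * A 4 - 55/168 * A 5 - 5/24 * A 6 + 7/24 * A 7)"
    using Bi[of 2] row2[of A] by simp
  have r3: "B 3 = 2 * (7/8 * A 0 + 13/24 * A 1 + 1/24 * A 2 - 31/88 * A 3 - 101/264 * A 4 + 1/88 * A 5 + 119/264 * A 6 - 49/264 * A 7)"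
    using Bi[of 3] row3[of A] by simp
  have r4: "B 4 = 2 * (9/8 * A 0 + 23/56 * A 1 - 3/8 * A 2 - 303/616 * A 3 + 1/8 * A 4 + 309/616 * A 5 - 3/8 * A 6 + 7/88 * A 7)"
    using Bi[of 4] row4[of A] by simp
  have r5: "B 5 = 2 * (11/8 * A 0 + 11/168 * A 1 - 121/168 * A 2 + 1/56 * A 3 + 103/168 * A 4 - 363/728 * A 5 + 53/312 * A 6 - 7/312 * A 7)"
    using Bi[of 5] row5[of A] by simp
  have r6: "B 6 = 2 * (13/8 * A 0 - 13/24 * A 1 - 13/24 * A 2 + 221/264 * A 3 - 13/24 * A 4 + 53/264 * A 5 - 1/24 * A 6 + 1/264 * A 7)"
    using Bi[of 6] row6[of A] by simp
  have r7: "B 7 = 2 * (15/8 * A 0 - 35/24 * A 1 + 7/8 * A 2 - 35/88 * A 3 + 35/264 * A 4 - 35/1144 * A 5 + 5/1144 * A 6 - 1/3432 * A 7)"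
    using Bi[of 7] row7[of A] by simp
  have s: "A 0 + A 1 + A 2 + A 3 + A 4 + A 5 + A 6 + A 7 = 4" "A 1 = B 1" "A 2 = B 2" "A 0 = 1"
    using sA e12 a0 unfolding sum7 by auto
  have nn: "0 \<le> A 1" "0 \<le> A 2" "0 \<le> A 3" "0 \<le> A 4" "0 \<le> A 5" "0 \<le> A 7"
    using Ak[of 1] Ak[of 2] Ak[of 3] Ak[of 4] Ak[of 5] Ak[of 7] by auto
  have zid: "2 / 3 * A 1 + 6 / 7 * A 2 + 20 / 21 * A 3 + 11 / 21 * A 4 + 1 / 6 * A 5 + 1 / 6 * A 7
   = 11/24 * (A 0 + A 1 + A 2 + A 3 + A 4 + A 5 + A 6 + A 7 - 4) + (B 1 - A 1) + 1/2 * (B 2 - A 2) + 11/6 * (1 - A 0)"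
    unfolding r1 r2 by (simp add: field_simps)
  have z: "2/3 * A 1 + 6/7 * A 2 + 20/21 * A 3 + 11/21 * A 4 + 1/6 * A 5 + 1/6 * A 7 = 0"
    using zid s by simp
  have zl: "A 1 \<le> 0" "A 2 \<le> 0" "A 3 \<le> 0" "A 4 \<le> 0" "A 5 \<le> 0" "A 7 \<le> 0"
    using z nn by linarith+
  have zz: "A 1 = 0" "A 2 = 0" "A 3 = 0" "A 4 = 0" "A 5 = 0" "A 7 = 0"
    using zl nn by (meson order_antisym)+
  have a6: "A 6 = 3" using zz s by simp
  have bv: "B 0 = 1" "B 1 = 0" "B 2 = 0" "B 3 = 49/11" "B 4 = 0" "B 5 = 49/13" "B 6 = 3" "B 7 = 540/143"
    using r0[unfolded zz a6 a0] r1[unfolded zz a6 a0] r2[unfolded zz a6 a0] r3[unfolded zz a6 a0]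
      r4[unfolded zz a6 a0] r5[unfolded zz a6 a0] r6[unfolded zz a6 a0] r7[unfolded zz a6 a0] by simp_all
  have sol: "A 0 = 1 \<and> A 1 = 0 \<and> A 2 = 0 \<and> A 3 = 0 \<and> A 4 = 0 \<and> A 5 = 0 \<and> A 6 = 3 \<and> A 7 = 0
     \<and> B 0 = 1 \<and> B 1 = 0 \<and> B 2 = 0 \<and> B 3 = 49/11 \<and> B 4 = 0 \<and> B 5 = 49/13 \<and> B 6 = 3 \<and> B 7 = 540/143"
    using zz a6 a0 bv by simp
  show "\<forall>k\<le>7. A k = A_sol ! k \<and> B k = B_sol ! k"
    unfolding all7 A_sol_def B_sol_def using sol by (simp add: numeral_eq_Suc)
  qed
qed

end
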